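(* Let $A=\{1/n:n\in\mathbb{Z}\setminus\{0\}\}$ and $B=\{\sqrt2/n:n\in\mathbb{Z}\setminus\{0\}\}$. Define $f,g:\mathbb{R}\to\mathbb{R}$ by $f(x)=x$ for $x\in A\cup\{0\}$, $f(x)=-1$ for $x>0$, $x\notin A$, $f(x)=1$ for $x<0$, $x\notin A$; and $g(x)=x$ for $x\in B\cup\{0\}$, $g(x)=-2$ for $x>0$, $x\notin B$, $g(x)=2$ for $x<0$, $x\notin B$. Then $f$ and $g$ are weakly symmetrically continuous at $0$, but none of $f+g$, $f-g$, $\max\{f,g\}$, $\min\{f,g\}$ is weakly symmetrically continuous at $0$.
   Context: For $D\subseteq\mathbb{R}$ nonempty and $a\in D$, $S_a(D)$ is the set of all sequences $(h_n)$ of positive reals converging to $0$ with $a\pm h_n\in D$ for every $n$. A function $f:D\to\mathbb{R}$ is weakly symmetrically continuous at $a$ if, whenever $S_a(D)\neq\emptyset$, there exists $(h_n)\in S_a(D)$ with $f(a+h_n)-f(a-h_n)\to0$. *)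

theory Defs
  imports "HOL-Analysis.Analysis"
begin

definition sym_seqs :: "real set \<Rightarrow> real \<Rightarrow> (nat \<Rightarrow> real) set" where
  "sym_seqs D a = {h. (\<forall>n. h n > 0) \<and> h \<longlonglongrightarrow> 0 \<and> (\<forall>n. a + h n \<in> D \<and> a - h n \<in> D)}"

definition weakly_sym_cont :: "real set \<Rightarrow> (real \<Rightarrow> real) \<Rightarrow> real \<Rightarrow> bool" where
  "weakly_sym_cont D f a \<longleftrightarrow>
     (sym_seqs D a \<noteq> {} \<longrightarrow>
       (\<exists>h\<in>sym_seqs D a. (\<lambda>n. f (a + h n) - f (a - h n)) \<longlonglongrightarrow> 0))"

definition setA :: "real set" where
  "setA = {1 / real_of_int n | n. n \<noteq> 0}"

definition setB :: "real set" where
  "setB = {sqrt 2 / real_of_int n | n. n \<noteq> 0}"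

definition fex :: "real \<Rightarrow> real" where
  "fex x = (if x \<in> setA \<union> {0} then x else if x > 0 then -1 else 1)"

definition gex :: "real \<Rightarrow> real" where
  "gex x = (if x \<in> setB \<union> {0} then x else if x > 0 then -2 else 2)"

end

theory Submission
  imports Defs "HOL-Computational_Algebra.Primes"
begin

lemma sqrt2_irr: "sqrt 2 \<notin> \<rat>"
proof
  let ?p = "2::nat"
  have pp: "prime ?p" by simp
  have p: "?p > 1" by simp
  assume "sqrt 2 \<in> \<rat>"
  hence "sqrt (real ?p) \<in> \<rat>" by simp
  then obtain m n :: nat
    where n: "n \<noteq> 0"
      and sqrt_rat: "\<bar>sqrt ?p\<bar> = m / n"
      and "coprime m n" by (rule Rats_abs_nat_div_natE)
  have eq: "m\<^sup>2 = ?p * n\<^sup>2"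
  proof -
    from n and sqrt_rat have "m = \<bar>sqrt ?p\<bar> * n" by simp
    then have "m\<^sup>2 = (sqrt ?p)\<^sup>2 * n\<^sup>2" by (simp add: power_mult_distrib)
    also have "(sqrt ?p)\<^sup>2 = ?p" by simp
    also have "\<dots> * n\<^sup>2 = ?p * n\<^sup>2" by simp
    finally show ?thesis by linarith
  qed
  have "?p dvd m \<and> ?p dvd n"
  proof
    from eq have "?p dvd m\<^sup>2" ..
    with pp show "?p dvd m" by (rule prime_dvd_power)
    then obtain k where "m = ?p * k" ..
    with eq have "?p * n\<^sup>2 = ?p\<^sup>2 * k\<^sup>2" by algebra
    with p have "n\<^sup>2 = ?p * k\<^sup>2" by (simp add: power2_eq_square)
    then have "?p dvd n\<^sup>2" ..
    with pp show "?p dvd n" by (rule prime_dvd_power)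
  qed
  then have "?p dvd gcd m n" by simp
  with \<open>coprime m n\<close> have "?p = 1" by simp
  with p show False by simp
qed

lemma A_neg: "x \<in> setA \<Longrightarrow> -x \<in> setA"
proof -
  assume "x \<in> setA"
  then obtain n where "x = 1 / real_of_int n" "n \<noteq> 0" unfolding setA_def by auto
  hence "-x = 1 / real_of_int (-n)" "-n \<noteq> 0" by auto
  thus ?thesis unfolding setA_def by blast
qed

lemma B_neg: "x \<in> setB \<Longrightarrow> -x \<in> setB"
proof -
  assume "x \<in> setB"
  then obtain n where "x = sqrt 2 / real_of_int n" "n \<noteq> 0" unfolding setB_def by auto
  hence "-x = sqrt 2 / real_of_int (-n)" "-n \<noteq> 0" by auto
  thus ?thesis unfolding setB_def by blast
qed

lemma AB_disj: "x \<in> setA \<Longrightarrow> x \<notin> setB"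
proof
  assume "x \<in> setA" "x \<in> setB"
  then obtain n m where nm: "x = 1 / real_of_int n" "n \<noteq> 0"
     "x = sqrt 2 / real_of_int m" "m \<noteq> 0" unfolding setA_def setB_def by blast
  hence "sqrt 2 = real_of_int m / real_of_int n" by (auto simp: field_simps)
  hence "sqrt 2 \<in> \<rat>" by simp
  thus False using sqrt2_irr by simp
qed

lemma fex_pos: "x > 0 \<Longrightarrow> fex x = (if x \<in> setA then x else -1)"
  unfolding fex_def by auto

lemma fex_neg: "x > 0 \<Longrightarrow> fex (-x) = (if x \<in> setA then -x else 1)"
  unfolding fex_def using A_neg[of x] A_neg[of "-x"] by auto

lemma gex_pos: "x > 0 \<Longrightarrow> gex x = (if x \<in> setB then x else -2)"
  unfolding gex_def by auto

lemma gex_neg: "x > 0 \<Longrightarrow> gex (-x) = (if x \<in> setB then -x else 2)"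
  unfolding gex_def using B_neg[of x] B_neg[of "-x"] by auto

lemma seq_ex: "(\<lambda>n. c / real (Suc n)) \<longlonglongrightarrow> 0"
  using tendsto_mult_right_zero[OF LIMSEQ_inverse_real_of_nat, of c]
  by (simp add: divide_inverse)

lemma seq_in: "c > 0 \<Longrightarrow> (\<lambda>n. c / real (Suc n)) \<in> sym_seqs UNIV 0"
  unfolding sym_seqs_def using seq_ex by auto

lemma not_wsc:
  assumes "\<And>x. 0 < x \<Longrightarrow> x < 1/2 \<Longrightarrow> \<bar>F x - F (-x)\<bar> \<ge> 1/2"
  shows "\<not> weakly_sym_cont UNIV F 0"
proof
  assume "weakly_sym_cont UNIV F 0"
  moreover have "sym_seqs UNIV 0 \<noteq> {}" using seq_in[of 1] by auto
  ultimately obtain h where h: "h \<in> sym_seqs UNIV 0"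
    and lim: "(\<lambda>n. F (0 + h n) - F (0 - h n)) \<longlonglongrightarrow> 0"
    unfolding weakly_sym_cont_def by blast
  from h have hp: "\<And>n. h n > 0" and hl: "h \<longlonglongrightarrow> 0" unfolding sym_seqs_def by auto
  have "eventually (\<lambda>n. dist (h n) 0 < 1/2) sequentially"
    using hl by (rule tendstoD) simp
  moreover have "eventually (\<lambda>n. dist (F (0 + h n) - F (0 - h n)) 0 < 1/2) sequentially"
    using lim by (rule tendstoD) simp
  ultimately have "eventually (\<lambda>n. False) sequentially"
  proof (rule eventually_elim2)
    fix n assume a: "dist (h n) 0 < 1/2" and b: "dist (F (0 + h n) - F (0 - h n)) 0 < 1/2"
    have "\<bar>F (h n) - F (- h n)\<bar> \<ge> 1/2" using assms[of "h n"] hp[of n] a by auto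
    thus False using b by auto
  qed
  thus False by simp
qed

theorem mainTheorem6:
  shows "weakly_sym_cont UNIV fex 0 \<and> weakly_sym_cont UNIV gex 0 \<and>
         \<not> weakly_sym_cont UNIV (\<lambda>x. fex x + gex x) 0 \<and>
         \<not> weakly_sym_cont UNIV (\<lambda>x. fex x - gex x) 0 \<and>
         \<not> weakly_sym_cont UNIV (\<lambda>x. max (fex x) (gex x)) 0 \<and>
         \<not> weakly_sym_cont UNIV (\<lambda>x. min (fex x) (gex x)) 0"
proof (intro conjI)
  show "weakly_sym_cont UNIV fex 0"
    unfolding weakly_sym_cont_def
  proof (intro impI bexI)
    let ?h = "\<lambda>n. 1 / real (Suc n)"
    show "?h \<in> sym_seqs UNIV 0" using seq_in[of 1] by simp
    have "\<And>n. ?h n \<in> setA"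
    proof -
      fix n
      have "?h n = 1 / real_of_int (int (Suc n))" by simp
      thus "?h n \<in> setA" unfolding setA_def by fastforce
    qed
    hence "\<And>n. fex (0 + ?h n) - fex (0 - ?h n) = 2 * ?h n"
      using fex_pos fex_neg by simp
    moreover have "(\<lambda>n. 2 * ?h n) \<longlonglongrightarrow> 0"
      using tendsto_mult_right_zero[OF seq_ex[of 1], of 2] by simp
    ultimately show "(\<lambda>n. fex (0 + ?h n) - fex (0 - ?h n)) \<longlonglongrightarrow> 0" by simp
  qed
  show "weakly_sym_cont UNIV gex 0"
    unfolding weakly_sym_cont_def
  proof (intro impI bexI)
    let ?h = "\<lambda>n. sqrt 2 / real (Suc n)"
    show "?h \<in> sym_seqs UNIV 0" using seq_in[of "sqrt 2"] by simp
    have "\<And>n. ?h n \<in> setB"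
    proof -
      fix n
      have "?h n = sqrt 2 / real_of_int (int (Suc n))" by simp
      thus "?h n \<in> setB" unfolding setB_def by fastforce
    qed
    moreover have "\<And>n. ?h n > 0" by simp
    ultimately have "\<And>n. gex (0 + ?h n) - gex (0 - ?h n) = 2 * ?h n"
      using gex_pos gex_neg by simp
    moreover have "(\<lambda>n. 2 * ?h n) \<longlonglongrightarrow> 0"
      using tendsto_mult_right_zero[OF seq_ex[of "sqrt 2"], of 2] by simp
    ultimately show "(\<lambda>n. gex (0 + ?h n) - gex (0 - ?h n)) \<longlonglongrightarrow> 0" by simp
  qed
  show "\<not> weakly_sym_cont UNIV (\<lambda>x. fex x + gex x) 0"
    by (rule not_wsc) (auto simp: fex_pos fex_neg gex_pos gex_neg dest: AB_disj)
  show "\<not> weakly_sym_cont UNIV (\<lambda>x. fex x - gex x) 0"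
    by (rule not_wsc) (auto simp: fex_pos fex_neg gex_pos gex_neg dest: AB_disj)
  show "\<not> weakly_sym_cont UNIV (\<lambda>x. max (fex x) (gex x)) 0"
    by (rule not_wsc) (auto simp: fex_pos fex_neg gex_pos gex_neg dest: AB_disj)
  show "\<not> weakly_sym_cont UNIV (\<lambda>x. min (fex x) (gex x)) 0"
    by (rule not_wsc) (auto simp: fex_pos fex_neg gex_pos gex_neg dest: AB_disj)
qed

end
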